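(* Let $k\ge 2$ and $0<\lambda\le\frac{1}{3k}$, and consider the common-chunk-protocol Markov process with $L_1(\mathbf{x})=\sum_{i=1}^k \bar S_i$. Then there exists $\epsilon>0$ such that $\Delta L_1(\mathbf{x})<-\epsilon$ for every state $\mathbf{x}$ with $S>3k^3$.
   Context: Model: Fix an integer $k\ge 2$ (number of chunks of a file) and $\lambda>0$. There is always exactly one seed holding all $k$ chunks. Non-seed peers arrive according to a Poisson process of rate $\lambda$, each arriving with no chunks; each non-seed peer holds a subset (its profile) of $\{1,\dots,k\}$ and leaves the system immediately once it holds all $k$ chunks. The state $\mathbf{x}$ of the continuous-time Markov process is the number of non-seed peers with each profile. $S$ denotes the total number of peers present, including the seed. Each non-seed peer has an independent rate-1 Poisson clock; at each tick it draws a sample of peers independently and uniformly at random with replacement from the current $S$ peers (seed and itself included) and may instantaneously download at most one chunk that it lacks and that is held by some sampled peer (such a chunk is a "match"). Counting draws with multiplicity, a chunk is "rare" in a sample of 3 draws if exactly one of the 3 draws holds it. Common chunk protocol: (i) a peer with no chunks draws 3 peers and downloads a chunk chosen uniformly among the rare matches, if there is any, otherwise nothing; (ii) a peer holding at least 1 and at most $k-2$ chunks draws 1 peer and downloads a uniformly chosen match, if any, otherwise nothing; (iii) a peer holding exactly $k-1$ chunks draws 3 peers and downloads its missing chunk only if that chunk is held by some draw and every chunk it holds is held by at least 2 of the 3 draws; otherwise nothing. Notation: $S_i$ ($1\le i\le k$) is the number of peers, including the seed, holding chunk $i$; $\bar S_i=S-S_i$. For a function $f$ on the state space, with $q(\mathbf{x},\mathbf{x}')$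 the transition rates of the Markov process, the drift is $\Delta f(\mathbf{x})=\sum_{\mathbf{x}'\neq\mathbf{x}} q(\mathbf{x},\mathbf{x}')\,(f(\mathbf{x}')-f(\mathbf{x}))$. *)

theory Defs
  imports "HOL-Analysis.Analysis"
begin

text \<open>A profile is a set of chunks. A state assigns to each
profile the number of non-seed peers holding exactly that profile; only proper
subsets of {1..k} can be occupied (a peer holding all chunks leaves).\<close>

definition chunks :: "nat \<Rightarrow> nat set" where
  "chunks k = {1..k}"

definition valid_state :: "nat \<Rightarrow> (nat set \<Rightarrow> nat) \<Rightarrow> bool" where
  "valid_state k x \<longleftrightarrow> (\<forall>D. \<not> D \<subset> chunks k \<longrightarrow> x D = 0)"

text \<open>Total number of peers, including the seed.\<close>
definition S_tot :: "nat \<Rightarrow> (nat set \<Rightarrow> nat) \<Rightarrow> nat" where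
  "S_tot k x = 1 + (\<Sum>D\<in>{D. D \<subset> chunks k}. x D)"

text \<open>Number of peers (including the seed) holding chunk i.\<close>
definition S_chunk :: "nat \<Rightarrow> (nat set \<Rightarrow> nat) \<Rightarrow> nat \<Rightarrow> nat" where
  "S_chunk k x i = 1 + (\<Sum>D\<in>{D. D \<subset> chunks k \<and> i \<in> D}. x D)"

definition L1 :: "nat \<Rightarrow> (nat set \<Rightarrow> nat) \<Rightarrow> real" where
  "L1 k x = (\<Sum>i\<in>chunks k. real (S_tot k x) - real (S_chunk k x i))"

text \<open>Probability that a single uniform draw (with replacement, among all S peers
including the seed and the drawing peer itself) returns a peer with profile D.\<close>
definition draw_w :: "nat \<Rightarrow> (nat set \<Rightarrow> nat) \<Rightarrow> nat set \<Rightarrow> real" where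
  "draw_w k x D = (real (x D) + (if D = chunks k then 1 else 0)) / real (S_tot k x)"

definition ind :: "bool \<Rightarrow> nat" where
  "ind b = (if b then 1 else 0)"

definition cnt3 :: "nat set \<Rightarrow> nat set \<Rightarrow> nat set \<Rightarrow> nat \<Rightarrow> nat" where
  "cnt3 D1 D2 D3 i = ind (i \<in> D1) + ind (i \<in> D2) + ind (i \<in> D3)"

text \<open>Probability, per clock tick, that a peer with profile C downloads chunk j
under the common chunk protocol.\<close>
definition dl_prob :: "nat \<Rightarrow> (nat set \<Rightarrow> nat) \<Rightarrow> nat set \<Rightarrow> nat \<Rightarrow> real" where
  "dl_prob k x C j =
    (if card C = 0 then
       (\<Sum>D1\<in>Pow (chunks k). \<Sum>D2\<in>Pow (chunks k). \<Sum>D3\<in>Pow (chunks k).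
          draw_w k x D1 * draw_w k x D2 * draw_w k x D3 *
          (let R = {i \<in> chunks k - C. cnt3 D1 D2 D3 i = 1}
           in if j \<in> R then 1 / real (card R) else 0))
     else if card C = k - 1 then
       (\<Sum>D1\<in>Pow (chunks k). \<Sum>D2\<in>Pow (chunks k). \<Sum>D3\<in>Pow (chunks k).
          draw_w k x D1 * draw_w k x D2 * draw_w k x D3 *
          (if j \<in> D1 \<union> D2 \<union> D3 \<and> (\<forall>i\<in>C. cnt3 D1 D2 D3 i \<ge> 2) then 1 else 0))
     else
       (\<Sum>D\<in>Pow (chunks k). draw_w k x D *
          (if j \<in> D - C then 1 / real (card (D - C)) else 0)))"

definition arrive :: "(nat set \<Rightarrow> nat) \<Rightarrow> (nat set \<Rightarrow> nat)" where
  "arrive x = x({} := x {} + 1)"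

definition move :: "nat \<Rightarrow> (nat set \<Rightarrow> nat) \<Rightarrow> nat set \<Rightarrow> nat \<Rightarrow> (nat set \<Rightarrow> nat)" where
  "move k x C j = (let x1 = x(C := x C - 1) in
     if insert j C = chunks k then x1 else x1(insert j C := x1 (insert j C) + 1))"

definition rate :: "nat \<Rightarrow> real \<Rightarrow> (nat set \<Rightarrow> nat) \<Rightarrow> (nat set \<Rightarrow> nat) \<Rightarrow> real" where
  "rate k lam x x' =
     (if x' = arrive x then lam else 0) +
     (\<Sum>C\<in>{C. C \<subset> chunks k}. \<Sum>j\<in>chunks k - C.
        real (x C) * dl_prob k x C j * (if x' = move k x C j then 1 else 0))"

definition drift :: "nat \<Rightarrow> real \<Rightarrow> ((nat set \<Rightarrow> nat) \<Rightarrow> real) \<Rightarrow> (nat set \<Rightarrow> nat) \<Rightarrow> real" where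
  "drift k lam f x = (\<Sum>\<^sub>\<infinity>x'\<in>UNIV - {x}. rate k lam x x' * (f x' - f x))"

end

theory Submission
  imports Defs
begin


definition Phi :: "nat \<Rightarrow> (nat set \<Rightarrow> nat) \<Rightarrow> real" where
  "Phi k x = (\<Sum>D\<in>Pow (chunks k). real (x D) * real (card (chunks k - D)))"

lemma fin_ch[simp]: "finite (chunks k)" by (simp add: chunks_def)

lemma fin_psub[simp]: "finite {D. D \<subset> chunks k}"
  by (rule finite_subset[of _ "Pow (chunks k)"]) auto

lemma fin_psub2[simp]: "finite {D. D \<subset> chunks k \<and> P D}"
  by (rule finite_subset[of _ "Pow (chunks k)"]) auto

lemma L1_Phi: "L1 k x = Phi k x"
proof -
  let ?P = "{D. D \<subset> chunks k}"
  have diff: "real (S_tot k x) - real (S_chunk k x i) =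
      (\<Sum>D\<in>?P. real (x D) * (if i \<in> D then 0 else 1))" for i
  proof -
    have "(\<Sum>D\<in>{D. D \<subset> chunks k \<and> i \<in> D}. real (x D)) = (\<Sum>D\<in>?P. if i \<in> D then real (x D) else 0)"
      by (simp add: sum.inter_filter[symmetric])
    moreover have "(\<Sum>D\<in>?P. real (x D)) = (\<Sum>D\<in>?P. if i \<in> D then real (x D) else 0) + (\<Sum>D\<in>?P. real (x D) * (if i \<in> D then 0 else 1))"
      by (simp add: sum.distrib[symmetric]; rule sum.cong; simp)
    ultimately show ?thesis by (simp add: S_tot_def S_chunk_def)
  qed
  have "L1 k x = (\<Sum>i\<in>chunks k. \<Sum>D\<in>?P. real (x D) * (if i \<in> D then 0 else 1))"
    by (simp add: L1_def diff)
  also have "\<dots> = (\<Sum>D\<in>?P. real (x D) * (\<Sum>i\<in>chunks k. (if i \<in> D then 0 else 1)))"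
    by (simp add: sum.swap[of _ "chunks k"] sum_distrib_left)
  also have "\<dots> = (\<Sum>D\<in>?P. real (x D) * real (card (chunks k - D)))"
  proof (rule sum.cong[OF refl])
    fix D
    have "(\<Sum>i\<in>chunks k. (if i \<in> D then 0 else 1::real)) = (\<Sum>i\<in>chunks k - D. 1)"
      by (rule sum.mono_neutral_cong_right) auto
    then show "real (x D) * (\<Sum>i\<in>chunks k. (if i \<in> D then 0 else 1)) = real (x D) * real (card (chunks k - D))"
      by simp
  qed
  also have "\<dots> = Phi k x"
    unfolding Phi_def by (rule sum.mono_neutral_left) auto
  finally show ?thesis .
qed

lemma Phi_upd:
  assumes "C \<in> Pow (chunks k)"
  shows "Phi k (x(C := v)) = Phi k x - real (x C) * real (card (chunks k - C)) + real v * real (card (chunks k - C))"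
proof -
  have f: "finite (Pow (chunks k))" by simp
  have "Phi k (x(C := v)) = real v * real (card (chunks k - C)) + (\<Sum>D\<in>Pow (chunks k) - {C}. real ((x(C:=v)) D) * real (card (chunks k - D)))"
    unfolding Phi_def using sum.remove[OF f assms, of "\<lambda>D. real ((x(C:=v)) D) * real (card (chunks k - D))"] by simp
  also have "(\<Sum>D\<in>Pow (chunks k) - {C}. real ((x(C:=v)) D) * real (card (chunks k - D))) = (\<Sum>D\<in>Pow (chunks k) - {C}. real (x D) * real (card (chunks k - D)))"
    by (rule sum.cong) auto
  also have "\<dots> = Phi k x - real (x C) * real (card (chunks k - C))"
    unfolding Phi_def using sum.remove[OF f assms, of "\<lambda>D. real (x D) * real (card (chunks k - D))"] by simp
  finally show ?thesis by (simp add: fun_upd_def)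
qed

lemma Phi_arrive: "Phi k (arrive x) = Phi k x + real k"
  unfolding arrive_def by (subst Phi_upd) (auto simp: chunks_def algebra_simps)

lemma Phi_move:
  assumes "C \<subset> chunks k" "j \<in> chunks k - C" "x C \<ge> 1"
  shows "Phi k (move k x C j) = Phi k x - 1"
proof -
  let ?x1 = "x(C := x C - 1)"
  have C: "C \<in> Pow (chunks k)" using assms by auto
  have cC: "card (chunks k - C) \<ge> 1" using assms(2)
    by (metis Diff_empty One_nat_def Suc_leI card_gt_0_iff empty_iff fin_ch finite_Diff)
  have p1: "Phi k ?x1 = Phi k x - real (card (chunks k - C))"
    using Phi_upd[OF C, of x "x C - 1"] assms(3) by (simp add: of_nat_diff algebra_simps)
  have ci: "card (chunks k - insert j C) = card (chunks k - C) - 1"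
    using assms(2) by (metis Diff_insert card_Diff_singleton Diff_iff fin_ch finite_Diff)
  show ?thesis
  proof (cases "insert j C = chunks k")
    case True
    then have "chunks k - C = {j}" using assms(2) by auto
    then show ?thesis using p1 True by (simp add: move_def Let_def)
  next
    case False
    have I: "insert j C \<in> Pow (chunks k)" using assms by auto
    have "Phi k (move k x C j) = Phi k ?x1 + real (card (chunks k - insert j C))"
      using False Phi_upd[OF I, of ?x1 "?x1 (insert j C) + 1"] by (simp add: move_def Let_def algebra_simps)
    then show ?thesis using p1 ci cC by (simp add: of_nat_diff)
  qed
qed

lemma has_sum_sum_fin:
  fixes f :: "'i \<Rightarrow> 'a \<Rightarrow> real"
  assumes "finite I" "\<And>i. i \<in> I \<Longrightarrow> (f i has_sum s i) A"
  shows "((\<lambda>x. \<Sum>i\<in>I. f i x) has_sum (\<Sum>i\<in>I. s i)) A"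
  using assms
proof (induction I rule: finite_induct)
  case empty then show ?case by simp
next
  case (insert a I)
  then show ?case by (simp add: has_sum_add)
qed

lemma has_sum_pt:
  fixes g :: "'a \<Rightarrow> real"
  assumes "g x = 0"
  shows "((\<lambda>y. (if y = a then c else 0) * g y) has_sum (c * g a)) (UNIV - {x})"
  by (rule has_sum_finite_neutralI[where B="{a} - {x}"]) (use assms in \<open>auto simp: insert_Diff_if\<close>)

definition Dtot :: "nat \<Rightarrow> (nat set \<Rightarrow> nat) \<Rightarrow> real" where
  "Dtot k x = (\<Sum>C\<in>{C. C \<subset> chunks k}. \<Sum>j\<in>chunks k - C. real (x C) * dl_prob k x C j)"

lemma drift_eq: "drift k lam (L1 k) x = lam * real k - Dtot k x"
proof -
  let ?P = "{C. C \<subset> chunks k}"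
  define g where "g y = L1 k y - L1 k x" for y
  have g0: "g x = 0" by (simp add: g_def)
  have h: "rate k lam x y * g y = (if y = arrive x then lam else 0) * g y +
     (\<Sum>C\<in>?P. \<Sum>j\<in>chunks k - C. (if y = move k x C j then real (x C) * dl_prob k x C j else 0) * g y)" for y
    unfolding rate_def distrib_right sum_distrib_right
    by (intro arg_cong2[where f="(+)"] refl sum.cong) auto
  have hs: "((\<lambda>y. rate k lam x y * g y) has_sum (lam * g (arrive x) +
      (\<Sum>C\<in>?P. \<Sum>j\<in>chunks k - C. real (x C) * dl_prob k x C j * g (move k x C j)))) (UNIV - {x})"
    unfolding h
    apply (rule has_sum_add)
     apply (rule has_sum_pt[where g=g, OF g0])
    apply (rule has_sum_sum_fin, simp)
    apply (rule has_sum_sum_fin, simp)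
    apply (rule has_sum_pt[where g=g, OF g0])
    done
  have ga: "g (arrive x) = real k" by (simp add: g_def L1_Phi Phi_arrive)
  have gm: "real (x C) * dl_prob k x C j * g (move k x C j) = - (real (x C) * dl_prob k x C j)"
    if "C \<in> ?P" "j \<in> chunks k - C" for C j
  proof (cases "x C = 0")
    case True then show ?thesis by simp
  next
    case False
    then show ?thesis using Phi_move[of C k j x] that by (simp add: g_def L1_Phi)
  qed
  have "drift k lam (L1 k) x = lam * g (arrive x) +
      (\<Sum>C\<in>?P. \<Sum>j\<in>chunks k - C. real (x C) * dl_prob k x C j * g (move k x C j))"
    unfolding drift_def using infsumI[OF hs] by (simp add: g_def)
  also have "\<dots> = lam * real k - Dtot k x"
    unfolding Dtot_def ga by (simp add: gm sum_negf)
  finally show ?thesis .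
qed

lemma w_nonneg: "draw_w k x D \<ge> 0"
  by (simp add: draw_w_def)

lemma S_pos: "real (S_tot k x) > 0"
  by (simp add: S_tot_def add_pos_nonneg sum_nonneg)

lemma sum_w:
  assumes "valid_state k x"
  shows "(\<Sum>D\<in>Pow (chunks k). draw_w k x D) = 1"
proof -
  have xc: "x (chunks k) = 0" using assms by (simp add: valid_state_def)
  have "(\<Sum>D\<in>Pow (chunks k). real (x D) + (if D = chunks k then 1 else 0))
      = (\<Sum>D\<in>Pow (chunks k). real (x D)) + 1"
    by (simp add: sum.distrib)
  also have "(\<Sum>D\<in>Pow (chunks k). real (x D)) = (\<Sum>D\<in>{D. D \<subset> chunks k}. real (x D))"
    by (rule sum.mono_neutral_right) (auto simp: xc)
  finally have "(\<Sum>D\<in>Pow (chunks k). real (x D) + (if D = chunks k then 1 else 0)) = real (S_tot k x)"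
    by (simp add: S_tot_def)
  then show ?thesis using S_pos[of k x]
    by (simp add: draw_w_def sum_divide_distrib[symmetric])
qed

lemma w_ch:
  assumes "valid_state k x"
  shows "draw_w k x (chunks k) = 1 / real (S_tot k x)"
  using assms by (simp add: valid_state_def draw_w_def)

lemma w_other: "D \<noteq> chunks k \<Longrightarrow> draw_w k x D = real (x D) / real (S_tot k x)"
  by (simp add: draw_w_def)

lemma sum_swap3:
  "(\<Sum>j\<in>J. \<Sum>a\<in>A. \<Sum>b\<in>B. \<Sum>c\<in>C. F a b c j) = (\<Sum>a\<in>A. \<Sum>b\<in>B. \<Sum>c\<in>C. \<Sum>j\<in>J. F a b c j)"
  by (rule trans[OF sum.swap], rule sum.cong[OF refl], rule trans[OF sum.swap], rule sum.cong[OF refl], rule sum.swap)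

lemma triple_prod:
  "(\<Sum>a\<in>A. \<Sum>b\<in>A. \<Sum>c\<in>A. (f a * g b * h c :: real)) = sum f A * sum g A * sum h A"
  by (simp add: sum_distrib_left[symmetric] sum_distrib_right[symmetric])

lemma sum_frac_ind:
  assumes "finite J" "R \<subseteq> J"
  shows "(\<Sum>j\<in>J. (if j \<in> R then 1 / real (card R) else 0)) = (if R = {} then 0 else 1)"
proof -
  have "(\<Sum>j\<in>J. (if j \<in> R then 1 / real (card R) else 0)) = (\<Sum>j\<in>R. 1 / real (card R))"
    by (rule sum.mono_neutral_cong_right) (use assms in auto)
  also have "\<dots> = (if R = {} then 0 else 1)"
    using assms finite_subset[OF assms(2)] by auto
  finally show ?thesis .
qed

lemma dl_nonneg: "dl_prob k x C j \<ge> 0"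
  unfolding dl_prob_def Let_def
  by (auto intro!: sum_nonneg mult_nonneg_nonneg w_nonneg)

lemma dl_empty:
  assumes "valid_state k x" "k \<ge> 2"
  shows "(\<Sum>j\<in>chunks k - {}. dl_prob k x {} j) \<ge> 3 * (draw_w k x {})^2 * (1 - draw_w k x {})"
proof -
  let ?P = "Pow (chunks k)"
  let ?w = "draw_w k x"
  define f where "f D = (if D \<noteq> {} then ?w D else 0)" for D
  define g where "g D = (if D = {} then ?w D else 0)" for D
  have sg: "sum g ?P = ?w {}" unfolding g_def by (simp add: sum.delta)
  have "sum f ?P + sum g ?P = (\<Sum>D\<in>?P. f D + g D)" by (simp add: sum.distrib)
  also have "\<dots> = (\<Sum>D\<in>?P. ?w D)" by (rule sum.cong) (auto simp: f_def g_def)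
  also have "\<dots> = 1" using sum_w[OF assms(1)] .
  finally have sfg: "sum f ?P + sum g ?P = 1" .
  have "(\<Sum>j\<in>chunks k - {}. dl_prob k x {} j) =
    (\<Sum>D1\<in>?P. \<Sum>D2\<in>?P. \<Sum>D3\<in>?P. \<Sum>j\<in>chunks k - {}.
          ?w D1 * ?w D2 * ?w D3 *
          (let R = {i \<in> chunks k - {}. cnt3 D1 D2 D3 i = 1}
           in if j \<in> R then 1 / real (card R) else 0))"
    apply (simp only: dl_prob_def card.empty simp_thms if_True)
    by (rule sum_swap3)
  also have "\<dots> = (\<Sum>D1\<in>?P. \<Sum>D2\<in>?P. \<Sum>D3\<in>?P. ?w D1 * ?w D2 * ?w D3 *
       (if {i \<in> chunks k - {}. cnt3 D1 D2 D3 i = 1} = {} then 0 else 1))"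
    unfolding Let_def sum_distrib_left[symmetric]
    apply (intro sum.cong refl)
    by (subst sum_frac_ind) auto
  also have "\<dots> \<ge> (\<Sum>D1\<in>?P. \<Sum>D2\<in>?P. \<Sum>D3\<in>?P. f D1 * g D2 * g D3 + g D1 * f D2 * g D3 + g D1 * g D2 * f D3)"
  proof (intro sum_mono)
    fix D1 D2 D3 assume H: "D1 \<in> ?P" "D2 \<in> ?P" "D3 \<in> ?P"
    have ne: "{i \<in> chunks k - {}. cnt3 D1 D2 D3 i = 1} \<noteq> {}" if
      "(D1 \<noteq> {} \<and> D2 = {} \<and> D3 = {}) \<or> (D1 = {} \<and> D2 \<noteq> {} \<and> D3 = {}) \<or> (D1 = {} \<and> D2 = {} \<and> D3 \<noteq> {})"
    proof -
      from that consider (a) "D1 \<noteq> {}" "D2 = {}" "D3 = {}" | (b) "D1 = {}" "D2 \<noteq> {}" "D3 = {}"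
         | (c) "D1 = {}" "D2 = {}" "D3 \<noteq> {}" by blast
      then show ?thesis
      proof cases
        case a
        then obtain i where "i \<in> D1" by blast
        then have "i \<in> {i \<in> chunks k - {}. cnt3 D1 D2 D3 i = 1}" using a H by (auto simp: cnt3_def ind_def)
        then show ?thesis by blast
      next
        case b
        then obtain i where "i \<in> D2" by blast
        then have "i \<in> {i \<in> chunks k - {}. cnt3 D1 D2 D3 i = 1}" using b H by (auto simp: cnt3_def ind_def)
        then show ?thesis by blast
      next
        case c
        then obtain i where "i \<in> D3" by blast
        then have "i \<in> {i \<in> chunks k - {}. cnt3 D1 D2 D3 i = 1}" using c H by (auto simp: cnt3_def ind_def)
        then show ?thesis by blast
      qed
    qed
    show "f D1 * g D2 * g D3 + g D1 * f D2 * g D3 + g D1 * g D2 * f D3 \<le> ?w D1 * ?w D2 * ?w D3 *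
       (if {i \<in> chunks k - {}. cnt3 D1 D2 D3 i = 1} = {} then 0 else 1)"
      using ne w_nonneg[of k x] by (auto simp: f_def g_def)
  qed
  also have "(\<Sum>D1\<in>?P. \<Sum>D2\<in>?P. \<Sum>D3\<in>?P. f D1 * g D2 * g D3 + g D1 * f D2 * g D3 + g D1 * g D2 * f D3)
     = 3 * (?w {})^2 * (1 - ?w {})"
  proof -
    have "(\<Sum>D1\<in>?P. \<Sum>D2\<in>?P. \<Sum>D3\<in>?P. f D1 * g D2 * g D3 + g D1 * f D2 * g D3 + g D1 * g D2 * f D3)
      = (\<Sum>D1\<in>?P. \<Sum>D2\<in>?P. \<Sum>D3\<in>?P. f D1 * g D2 * g D3) + (\<Sum>D1\<in>?P. \<Sum>D2\<in>?P. \<Sum>D3\<in>?P. g D1 * f D2 * g D3)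
        + (\<Sum>D1\<in>?P. \<Sum>D2\<in>?P. \<Sum>D3\<in>?P. g D1 * g D2 * f D3)"
      by (simp only: sum.distrib)
    also have "\<dots> = 3 * (sum g ?P)^2 * sum f ?P"
      by (simp only: triple_prod) (simp add: power2_eq_square)
    finally show ?thesis using sg sfg by simp
  qed
  finally show ?thesis .
qed

lemma card_ch[simp]: "card (chunks k) = k" by (simp add: chunks_def)

lemma dl_f:
  assumes "valid_state k x" "k \<ge> 2" "j0 \<in> chunks k"
  shows "(\<Sum>j\<in>chunks k - (chunks k - {j0}). dl_prob k x (chunks k - {j0}) j) \<ge>
     3 * (\<Sum>D\<in>Pow (chunks k). if j0 \<in> D then draw_w k x D else 0) * (draw_w k x (chunks k - {j0}))^2"
proof -
  let ?P = "Pow (chunks k)"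
  let ?w = "draw_w k x"
  define C0 where "C0 = chunks k - {j0}"
  define gG where "gG D = (if j0 \<in> D then ?w D else 0)" for D
  define gC where "gC D = (if D = C0 then ?w D else 0)" for D
  have dC: "chunks k - C0 = {j0}" using assms(3) by (auto simp: C0_def)
  have cC: "card C0 = k - 1" using assms(3) by (simp add: C0_def)
  have c1: "(card C0 = 0) = False" using cC assms(2) by simp
  have c2: "(card C0 = k - 1) = True" using cC by simp
  have sC: "sum gC ?P = ?w C0" unfolding gC_def by (simp add: sum.delta C0_def)
  have "(\<Sum>j\<in>chunks k - C0. dl_prob k x C0 j) = dl_prob k x C0 j0" using dC by simp
  also have "\<dots> = (\<Sum>D1\<in>?P. \<Sum>D2\<in>?P. \<Sum>D3\<in>?P.
          ?w D1 * ?w D2 * ?w D3 *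
          (if j0 \<in> D1 \<union> D2 \<union> D3 \<and> (\<forall>i\<in>C0. cnt3 D1 D2 D3 i \<ge> 2) then 1 else 0))"
    by (simp only: dl_prob_def c1 c2 if_False if_True)
  also have "\<dots> \<ge> (\<Sum>D1\<in>?P. \<Sum>D2\<in>?P. \<Sum>D3\<in>?P. gG D1 * gC D2 * gC D3 + gC D1 * gG D2 * gC D3 + gC D1 * gC D2 * gG D3)"
  proof (intro sum_mono)
    fix D1 D2 D3
    have j0: "j0 \<notin> C0" by (simp add: C0_def)
    show "gG D1 * gC D2 * gC D3 + gC D1 * gG D2 * gC D3 + gC D1 * gC D2 * gG D3 \<le> ?w D1 * ?w D2 * ?w D3 *
          (if j0 \<in> D1 \<union> D2 \<union> D3 \<and> (\<forall>i\<in>C0. cnt3 D1 D2 D3 i \<ge> 2) then 1 else 0)"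
      using j0 w_nonneg[of k x]
      by (cases "D1 = C0"; cases "D2 = C0"; cases "D3 = C0") (auto simp: gG_def gC_def cnt3_def ind_def)
  qed
  also have "(\<Sum>D1\<in>?P. \<Sum>D2\<in>?P. \<Sum>D3\<in>?P. gG D1 * gC D2 * gC D3 + gC D1 * gG D2 * gC D3 + gC D1 * gC D2 * gG D3)
     = 3 * sum gG ?P * (sum gC ?P)^2"
  proof -
    have "(\<Sum>D1\<in>?P. \<Sum>D2\<in>?P. \<Sum>D3\<in>?P. gG D1 * gC D2 * gC D3 + gC D1 * gG D2 * gC D3 + gC D1 * gC D2 * gG D3)
      = (\<Sum>D1\<in>?P. \<Sum>D2\<in>?P. \<Sum>D3\<in>?P. gG D1 * gC D2 * gC D3) + (\<Sum>D1\<in>?P. \<Sum>D2\<in>?P. \<Sum>D3\<in>?P. gC D1 * gG D2 * gC D3)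
        + (\<Sum>D1\<in>?P. \<Sum>D2\<in>?P. \<Sum>D3\<in>?P. gC D1 * gC D2 * gG D3)"
      by (simp only: sum.distrib)
    also have "\<dots> = 3 * sum gG ?P * (sum gC ?P)^2"
      by (simp only: triple_prod) (simp add: power2_eq_square)
    finally show ?thesis .
  qed
  finally show ?thesis unfolding C0_def[symmetric] gG_def[symmetric] sC by simp
qed

lemma dl_mid:
  assumes "C \<subset> chunks k" "card C \<noteq> 0" "card C \<noteq> k - 1"
  shows "(\<Sum>j\<in>chunks k - C. dl_prob k x C j) = (\<Sum>D\<in>Pow (chunks k). if D - C = {} then 0 else draw_w k x D)"
proof -
  have c1: "(card C = 0) = False" "(card C = k - 1) = False" using assms by simp_all
  have "(\<Sum>j\<in>chunks k - C. dl_prob k x C j) = (\<Sum>j\<in>chunks k - C. \<Sum>D\<in>Pow (chunks k). draw_w k x D *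
          (if j \<in> D - C then 1 / real (card (D - C)) else 0))"
    by (simp only: dl_prob_def c1 if_False)
  also have "\<dots> = (\<Sum>D\<in>Pow (chunks k). draw_w k x D * (\<Sum>j\<in>chunks k - C.
          (if j \<in> D - C then 1 / real (card (D - C)) else 0)))"
    by (subst sum.swap) (simp add: sum_distrib_left)
  also have "\<dots> = (\<Sum>D\<in>Pow (chunks k). if D - C = {} then 0 else draw_w k x D)"
    by (intro sum.cong refl) (subst sum_frac_ind, auto)
  finally show ?thesis .
qed



lemma arith_final:
  fixes A B F M S k D :: real
  assumes hS: "S = 1 + A + B + F" and A0: "A \<ge> 0" and B0: "B \<ge> 0" and M0: "M \<ge> 0"
    and MF: "M \<le> F" and FkM: "F \<le> k * M" and k2: "k \<ge> 2" and Sk: "S > 3 * k^3"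
    and hB: "B = 0 \<or> B \<ge> 1"
    and h1: "D * S^3 \<ge> 3 * A^3 * (S - A)"
    and h2: "D * S \<ge> B * (1 + F)"
    and h3: "D * S^3 \<ge> 3 * M^3 * (1 + F - M)"
  shows "D \<ge> 3/8"
proof -
  have k3: "k^3 \<ge> 8" using power_mono[OF k2, of 3] by simp
  have S24: "S > 24" using Sk k3 by simp
  have Sp: "S > 0" using S24 by simp
  have S3p: "S^3 > 0" using Sp by simp
  have F0: "F \<ge> 0" using M0 MF by simp
  have D0: "D \<ge> 0"
  proof -
    have "D * S \<ge> 0" using h2 B0 F0 by (smt (verit) mult_nonneg_nonneg)
    then show ?thesis using Sp by (simp add: zero_le_mult_iff)
  qed
  have goal: "D \<ge> 3/8" if "D * S^3 \<ge> 3/8 * S^3"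
    using that S3p by simp
  show ?thesis
  proof (cases "2 * A \<ge> S")
    case True
    have "(2*A)^3 \<ge> S^3" using power_mono[OF True, of 3] Sp by simp
    then have a3: "A^3 \<ge> S^3 / 8" by simp
    have "S - A \<ge> 1" using hS B0 F0 by simp
    then have "3 * A^3 * (S - A) \<ge> 3 * (S^3/8) * 1"
      using a3 S3p A0 by (intro mult_mono) auto
    then have "D * S^3 \<ge> 3/8 * S^3" using h1 by linarith
    then show ?thesis by (rule goal)
  next
    case False
    note nA = False
    show ?thesis
    proof (cases "4 * A^3 \<ge> S^2")
      case True
      have "S - A \<ge> S/2" using nA by simp
      then have i1: "3 * A^3 * (S - A) \<ge> 3 * A^3 * (S/2)"
        using A0 by (intro mult_left_mono) auto
      have i2: "3 * A^3 * (S/2) \<ge> 3 * (S^2/4) * (S/2)"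
        using True Sp by (intro mult_right_mono) auto
      have "3 * (S^2/4) * (S/2) = 3/8 * S^3" by (simp add: power3_eq_cube power2_eq_square)
      then have "3 * A^3 * (S - A) \<ge> 3/8 * S^3" using i1 i2 by linarith
      then have "D * S^3 \<ge> 3/8 * S^3" using h1 by linarith
    then show ?thesis by (rule goal)
    next
      case False
      have Ak: "2 * k * A < S"
      proof (rule ccontr)
        assume "\<not> 2 * k * A < S"
        then have "2*k*A \<ge> S" by simp
        then have "(2*k*A)^3 \<ge> S^3" using power_mono[of S "2*k*A" 3] Sp by simp
        then have "8 * k^3 * A^3 \<ge> S^3" by (simp add: power_mult_distrib)
        moreover have "8 * k^3 * A^3 \<le> 2 * k^3 * S^2"
        proof -
          have "k^3 * (4 * A^3) \<le> k^3 * S^2" using False k3 k2 by (intro mult_left_mono) auto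
          then show ?thesis by (simp add: algebra_simps)
        qed
        moreover have "2 * k^3 * S^2 < S * S^2" using Sk Sp by simp
        moreover have "S * S^2 = S^3" by (simp add: power3_eq_cube power2_eq_square)
        ultimately show False by linarith
      qed
      have A4: "4 * A < S"
      proof -
        have "4 * A \<le> 2 * k * A" using k2 A0 by (simp add: mult_right_mono)
        then show ?thesis using Ak by linarith
      qed
      show ?thesis
      proof (cases "8 * B \<ge> 3 * S")
        case True
        have "B * (1 + F) \<ge> B" using B0 F0 by (simp add: algebra_simps)
        then have "D * S \<ge> 3/8 * S" using h2 True by simp
        then show ?thesis using Sp by simp
      next
        case False
        note nB = False
        show ?thesis
        proof (cases "B \<ge> 1")
          case True
          have "B * (1 + F) \<ge> 1 + F" using True F0 by (simp add: mult_right_mono)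
          moreover have "1 + F > 3/8 * S" using hS A4 nB by simp
          ultimately have "D * S \<ge> 3/8 * S" using h2 by simp
          then show ?thesis using Sp by simp
        next
        case False
        then have B00: "B = 0" using hB by simp
        have FS: "F \<ge> 17/24 * S" using hS B00 A4 S24 by simp
        have F4a: "(17/24*S)^4 \<le> F^4" by (rule power_mono[OF FS]) (use Sp in simp)
        have F4: "F^4 \<ge> (17/24)^4 * S^4"
          using F4a by (simp only: power_mult_distrib)
        have c4: "(17/24::real)^4 = 83521/331776" by (simp add: power_divide)
        have F4': "F^4 \<ge> 83521/331776 * S^4" using F4 by (simp only: c4)
        have S4: "S^4 = S * S^3" by (simp add: eval_nat_numeral)
        have S4p: "S^4 > 0" using Sp by simp
        have DS3: "D * S^3 \<ge> 0" using D0 S3p by simp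
        have goal4: "D \<ge> 3/8" if "S^4 * D \<ge> S^4 * (3/8)"
          using that S4p by (simp add: mult_le_cancel_left_pos)
        show ?thesis
        proof (cases "2 * M < F")
          case True
          have kM: "(k * M)^3 \<ge> F^3" using power_mono[OF FkM, of 3] F0 by simp
          then have kM': "k^3 * M^3 \<ge> F^3" by (simp add: power_mult_distrib)
          have "1 + F - M \<ge> F / 2" using True by simp
          then have "3 * M^3 * (1 + F - M) \<ge> 3 * M^3 * (F/2)" using M0 by (intro mult_left_mono) auto
          moreover have "3 * M^3 * (F/2) = 3/2 * M^3 * F" by simp
          ultimately have h3': "D * S^3 \<ge> 3/2 * M^3 * F" using h3 by linarith
          have i1: "k^3 * (D * S^3) \<ge> k^3 * (3/2 * M^3 * F)" by (rule mult_left_mono[OF h3']) (use k3 k2 in simp)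
          have i2: "(k^3 * M^3) * F \<ge> F^3 * F" using kM' F0 by (rule mult_right_mono)
          have "F^3 * F = F^4" by (simp add: eval_nat_numeral)
          moreover have "k^3 * (3/2 * M^3 * F) = 3/2 * ((k^3 * M^3) * F)" by simp
          ultimately have e1: "k^3 * (D * S^3) \<ge> 3/2 * F^4" using i1 i2 by linarith
          have i3: "(3 * k^3) * (D * S^3) \<le> S * (D * S^3)" using Sk DS3 by (intro mult_right_mono) auto
          have "(3 * k^3) * (D * S^3) = 3 * (k^3 * (D * S^3))" by simp
          moreover have "S * (D * S^3) = S^4 * D" using S4 by simp
          ultimately have "S^4 * D \<ge> 9/2 * F^4" using e1 i3 by linarith
          then have "S^4 * D \<ge> 9/2 * (83521/331776) * S^4" using F4' by linarith
          then have "S^4 * D \<ge> S^4 * (3/8)" using S4p by linarith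
          then show ?thesis by (rule goal4)
        next
          case False
          note nM = False
          show ?thesis
          proof (cases "4 * M > 3 * F")
            case True
            have "17/32 * S \<le> M" using True FS by linarith
            then have "(17/32 * S)^3 \<le> M^3" by (rule power_mono) (use Sp in simp)
            then have m3: "M^3 \<ge> (17/32)^3 * S^3" by (simp only: power_mult_distrib)
            have "3 * M^3 * (1 + F - M) \<ge> 3 * M^3 * 1" using MF M0 by (intro mult_left_mono) auto
            moreover have c3: "(17/32::real)^3 = 4913/32768" by (simp add: power_divide)
            ultimately have "D * S^3 \<ge> 3 * (4913/32768 * S^3)" using h3 m3 by (simp only: c3)
            then have "D * S^3 \<ge> 3/8 * S^3" using S3p by linarith
            then show ?thesis by (rule goal)
          next
            case False
            have q1: "1 + F - M \<ge> F / 4" using False by simp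
            have q2: "M^3 \<ge> (F/2)^3" using nM F0 by (intro power_mono) auto
            have "3 * M^3 * (1 + F - M) \<ge> 3 * (F/2)^3 * (F/4)" using F0 M0 q1 q2
              by (intro mult_mono) auto
            moreover have "3 * (F/2)^3 * (F/4) = 3/32 * F^4" by (simp add: eval_nat_numeral)
            ultimately have "D * S^3 \<ge> 3/32 * F^4" using h3 by linarith
            then have e2: "D * S^3 \<ge> 3/32 * (83521/331776) * S^4" using F4' by linarith
            have "S * S^3 \<ge> 24 * S^3" using S24 S3p by (intro mult_right_mono) auto
            then have "D * S^3 \<ge> 3/8 * S^3" using e2 S4 S3p by linarith
            then show ?thesis by (rule goal)
          qed
        qed
        qed
      qed
    qed
  qed
qed



definition Mid :: "nat \<Rightarrow> nat set set" where
  "Mid k = {C. C \<subset> chunks k \<and> card C \<noteq> 0 \<and> card C \<noteq> k - 1}"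
definition Fs :: "nat \<Rightarrow> nat set set" where
  "Fs k = {C. C \<subset> chunks k \<and> card C = k - 1}"

lemma fin_Mid[simp]: "finite (Mid k)" unfolding Mid_def by simp
lemma fin_Fs[simp]: "finite (Fs k)" unfolding Fs_def by simp

lemma psub_card0: "C \<subset> chunks k \<Longrightarrow> (card C = 0) = (C = {})"
  using finite_subset[of C "chunks k"] by auto

lemma decomp:
  assumes "k \<ge> 2"
  shows "real (S_tot k x) = 1 + real (x {}) + (\<Sum>C\<in>Mid k. real (x C)) + (\<Sum>C\<in>Fs k. real (x C))"
proof -
  have e: "{C. C \<subset> chunks k} = insert {} (Mid k \<union> Fs k)"
    using assms psub_card0[of _ k] by (auto simp: Mid_def Fs_def chunks_def)
  have n: "{} \<notin> Mid k \<union> Fs k" using assms by (auto simp: Mid_def Fs_def)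
  have d: "Mid k \<inter> Fs k = {}" by (auto simp: Mid_def Fs_def)
  have "real (S_tot k x) = 1 + (\<Sum>C\<in>{C. C \<subset> chunks k}. real (x C))" by (simp add: S_tot_def)
  also have "\<dots> = 1 + real (x {}) + (\<Sum>C\<in>Mid k. real (x C)) + (\<Sum>C\<in>Fs k. real (x C))"
    unfolding e using n d by (simp add: sum.union_disjoint)
  finally show ?thesis .
qed

lemma Dtot_ge:
  assumes "T \<subseteq> {C. C \<subset> chunks k}"
  shows "(\<Sum>C\<in>T. real (x C) * (\<Sum>j\<in>chunks k - C. dl_prob k x C j)) \<le> Dtot k x"
proof -
  have "(\<Sum>C\<in>T. real (x C) * (\<Sum>j\<in>chunks k - C. dl_prob k x C j)) \<le>
        (\<Sum>C\<in>{C. C \<subset> chunks k}. real (x C) * (\<Sum>j\<in>chunks k - C. dl_prob k x C j))"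
    by (rule sum_mono2) (use assms in \<open>auto intro!: mult_nonneg_nonneg sum_nonneg dl_nonneg\<close>)
  also have "\<dots> = Dtot k x" unfolding Dtot_def by (simp add: sum_distrib_left)
  finally show ?thesis .
qed

lemma Fs_form:
  assumes "C \<in> Fs k" "k \<ge> 2"
  shows "\<exists>i\<in>chunks k. C = chunks k - {i}"
proof -
  have C: "C \<subset> chunks k" "card C = k - 1" using assms by (auto simp: Fs_def)
  have fC: "finite C" using C(1) finite_subset[of C "chunks k"] by auto
  have "card (chunks k - C) = 1" using C assms(2) fC by (simp add: card_Diff_subset)
  then obtain i where i: "chunks k - C = {i}" by (auto simp: card_Suc_eq)
  then have "C = chunks k - {i}" "i \<in> chunks k" using C by auto
  then show ?thesis by blast
qed

lemma Fs_mem: "i \<in> chunks k \<Longrightarrow> chunks k - {i} \<in> Fs k"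
  by (auto simp: Fs_def)

lemma card_Fs: assumes "k \<ge> 2" shows "card (Fs k) \<le> k"
proof -
  have "Fs k \<subseteq> (\<lambda>i. chunks k - {i}) ` chunks k" using Fs_form[OF _ assms] by blast
  then have "card (Fs k) \<le> card ((\<lambda>i. chunks k - {i}) ` chunks k)" by (intro card_mono) auto
  also have "\<dots> \<le> k" using card_image_le[of "chunks k" "\<lambda>i. chunks k - {i}"] by simp
  finally show ?thesis .
qed



lemma empty_ne_ch: "k \<ge> 2 \<Longrightarrow> {} \<noteq> chunks k"
  by (auto simp: chunks_def)

lemma bound1:
  assumes "valid_state k x" "k \<ge> 2"
  shows "Dtot k x * real (S_tot k x)^3 \<ge> 3 * real (x {})^3 * (real (S_tot k x) - real (x {}))"
proof -
  let ?S = "real (S_tot k x)" and ?A = "real (x {})"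
  have Sp: "?S > 0" by (rule S_pos)
  have w0: "draw_w k x {} = ?A / ?S" using w_other[OF empty_ne_ch[OF assms(2)]] by simp
  have "?A * (\<Sum>j\<in>chunks k - {}. dl_prob k x {} j) \<le> Dtot k x"
  proof -
    have "{} \<subset> chunks k" using empty_ne_ch[OF assms(2)] by auto
    then show ?thesis using Dtot_ge[of "{{}}" k x] by simp
  qed
  moreover have "?A * (3 * (?A/?S)^2 * (1 - ?A/?S)) \<le> ?A * (\<Sum>j\<in>chunks k - {}. dl_prob k x {} j)"
    using dl_empty[OF assms] w0 by (intro mult_left_mono) auto
  ultimately have "?A * (3 * (?A/?S)^2 * (1 - ?A/?S)) \<le> Dtot k x" by linarith
  then have "?A * (3 * (?A/?S)^2 * (1 - ?A/?S)) * ?S^3 \<le> Dtot k x * ?S^3"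
    using Sp by (intro mult_right_mono) auto
  moreover have "?A * (3 * (?A/?S)^2 * (1 - ?A/?S)) * ?S^3 = 3 * ?A^3 * (?S - ?A)"
    using Sp by (simp add: field_simps eval_nat_numeral)
  ultimately show ?thesis by linarith
qed

lemma sumFs_w:
  assumes "valid_state k x" "k \<ge> 2" "T \<subseteq> Fs k"
  shows "(\<Sum>D\<in>insert (chunks k) T. draw_w k x D) = (1 + (\<Sum>C\<in>T. real (x C))) / real (S_tot k x)"
proof -
  have n: "chunks k \<notin> T" using assms(3) by (auto simp: Fs_def)
  have fT: "finite T" using assms(3) finite_subset by (metis fin_Fs)
  have "(\<Sum>D\<in>T. draw_w k x D) = (\<Sum>D\<in>T. real (x D) / real (S_tot k x))"
    by (rule sum.cong[OF refl], rule w_other) (use n in auto)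
  then show ?thesis using n fT w_ch[OF assms(1)] by (simp add: add_divide_distrib sum_divide_distrib)
qed

lemma bound2:
  assumes "valid_state k x" "k \<ge> 2"
  shows "Dtot k x * real (S_tot k x) \<ge> (\<Sum>C\<in>Mid k. real (x C)) * (1 + (\<Sum>C\<in>Fs k. real (x C)))"
proof -
  let ?S = "real (S_tot k x)" and ?F = "(\<Sum>C\<in>Fs k. real (x C))"
  have Sp: "?S > 0" by (rule S_pos)
  have each: "(1 + ?F) / ?S \<le> (\<Sum>j\<in>chunks k - C. dl_prob k x C j)" if C: "C \<in> Mid k" for C
  proof -
    have Cp: "C \<subset> chunks k" "card C \<noteq> 0" "card C \<noteq> k - 1" using C by (auto simp: Mid_def)
    have fC: "finite C" using Cp(1) finite_subset[of C "chunks k"] by auto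
    have cCk: "card C < k" using psubset_card_mono[OF fin_ch Cp(1)] by simp
    have nz: "D - C \<noteq> {}" if D: "D \<in> insert (chunks k) (Fs k)" for D
    proof
      assume "D - C = {}"
      then have "D \<subseteq> C" by blast
      then have "card D \<le> card C" using fC card_mono by blast
      moreover have "card D \<ge> k - 1" using D by (auto simp: Fs_def)
      ultimately show False using cCk Cp(3) by simp
    qed
    have "(\<Sum>D\<in>insert (chunks k) (Fs k). if D - C = {} then 0 else draw_w k x D)
          \<le> (\<Sum>D\<in>Pow (chunks k). if D - C = {} then 0 else draw_w k x D)"
      by (rule sum_mono2) (auto simp: Fs_def w_nonneg)
    moreover have "(\<Sum>D\<in>insert (chunks k) (Fs k). if D - C = {} then 0 else draw_w k x D)
          = (\<Sum>D\<in>insert (chunks k) (Fs k). draw_w k x D)"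
      by (rule sum.cong[OF refl]) (use nz in auto)
    ultimately show ?thesis using sumFs_w[OF assms order_refl] dl_mid[OF Cp] by simp
  qed
  have "(\<Sum>C\<in>Mid k. real (x C) * ((1 + ?F) / ?S)) \<le> (\<Sum>C\<in>Mid k. real (x C) * (\<Sum>j\<in>chunks k - C. dl_prob k x C j))"
    by (rule sum_mono, rule mult_left_mono[OF each]) auto
  also have "\<dots> \<le> Dtot k x" by (rule Dtot_ge) (auto simp: Mid_def)
  finally have i: "(\<Sum>C\<in>Mid k. real (x C) * ((1 + ?F) / ?S)) \<le> Dtot k x" .
  have "(\<Sum>C\<in>Mid k. real (x C) * ((1 + ?F) / ?S)) = (\<Sum>C\<in>Mid k. real (x C)) * ((1 + ?F) / ?S)"
    by (rule sum_distrib_right[symmetric])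
  then have "(\<Sum>C\<in>Mid k. real (x C)) * (1 + ?F) / ?S \<le> Dtot k x" using i by simp
  then show ?thesis using Sp by (simp add: pos_divide_le_eq)
qed

lemma bound3:
  assumes "valid_state k x" "k \<ge> 2" "C0 \<in> Fs k"
  shows "Dtot k x * real (S_tot k x)^3 \<ge> 3 * real (x C0)^3 * (1 + (\<Sum>C\<in>Fs k. real (x C)) - real (x C0))"
proof -
  let ?S = "real (S_tot k x)" and ?F = "(\<Sum>C\<in>Fs k. real (x C))" and ?M = "real (x C0)"
  have Sp: "?S > 0" by (rule S_pos)
  obtain j0 where j0: "j0 \<in> chunks k" "C0 = chunks k - {j0}" using Fs_form[OF assms(3,2)] by blast
  have C0n: "C0 \<noteq> chunks k" using j0 by auto
  have wC: "draw_w k x C0 = ?M / ?S" using w_other[OF C0n] by simp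
  have FF: "?F = ?M + (\<Sum>C\<in>Fs k - {C0}. real (x C))" using sum.remove[OF fin_Fs assms(3)] by simp
  have inG: "j0 \<in> D" if "D \<in> insert (chunks k) (Fs k - {C0})" for D
    using that j0 Fs_form[OF _ assms(2), of D] by auto
  have "(\<Sum>D\<in>insert (chunks k) (Fs k - {C0}). if j0 \<in> D then draw_w k x D else 0)
       \<le> (\<Sum>D\<in>Pow (chunks k). if j0 \<in> D then draw_w k x D else 0)"
    by (rule sum_mono2) (auto simp: Fs_def w_nonneg)
  moreover have "(\<Sum>D\<in>insert (chunks k) (Fs k - {C0}). if j0 \<in> D then draw_w k x D else 0)
       = (\<Sum>D\<in>insert (chunks k) (Fs k - {C0}). draw_w k x D)"
    by (rule sum.cong[OF refl]) (use inG in auto)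
  moreover have "(\<Sum>D\<in>insert (chunks k) (Fs k - {C0}). draw_w k x D) = (1 + ?F - ?M) / ?S"
    using sumFs_w[OF assms(1,2), of "Fs k - {C0}"] FF by (simp add: algebra_simps)
  ultimately have wG: "(1 + ?F - ?M) / ?S \<le> (\<Sum>D\<in>Pow (chunks k). if j0 \<in> D then draw_w k x D else 0)"
    by linarith
  have dl: "3 * (\<Sum>D\<in>Pow (chunks k). if j0 \<in> D then draw_w k x D else 0) * (?M / ?S)^2
      \<le> (\<Sum>j\<in>chunks k - C0. dl_prob k x C0 j)"
    using dl_f[OF assms(1,2) j0(1)] j0(2) wC by simp
  have "?M * (\<Sum>j\<in>chunks k - C0. dl_prob k x C0 j) \<le> Dtot k x"
    using Dtot_ge[of "{C0}" k x] assms(3) by (auto simp: Fs_def)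
  moreover have "?M * (3 * ((1 + ?F - ?M) / ?S) * (?M / ?S)^2) \<le> ?M * (\<Sum>j\<in>chunks k - C0. dl_prob k x C0 j)"
  proof (rule mult_left_mono)
    have "3 * ((1 + ?F - ?M) / ?S) * (?M / ?S)^2 \<le> 3 * (\<Sum>D\<in>Pow (chunks k). if j0 \<in> D then draw_w k x D else 0) * (?M / ?S)^2"
      by (rule mult_right_mono[OF mult_left_mono[OF wG]]) auto
    then show "3 * ((1 + ?F - ?M) / ?S) * (?M / ?S)^2 \<le> (\<Sum>j\<in>chunks k - C0. dl_prob k x C0 j)"
      using dl by linarith
  qed simp
  ultimately have "?M * (3 * ((1 + ?F - ?M) / ?S) * (?M / ?S)^2) \<le> Dtot k x" by linarith
  then have "?M * (3 * ((1 + ?F - ?M) / ?S) * (?M / ?S)^2) * ?S^3 \<le> Dtot k x * ?S^3"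
    using Sp by (intro mult_right_mono) auto
  moreover have "?M * (3 * ((1 + ?F - ?M) / ?S) * (?M / ?S)^2) * ?S^3 = 3 * ?M^3 * (1 + ?F - ?M)"
    using Sp by (simp add: field_simps eval_nat_numeral)
  ultimately show ?thesis by linarith
qed



theorem mainTheorem6:
  fixes k :: nat and lam :: real
  assumes "k \<ge> 2" and "0 < lam" and "lam \<le> 1 / (3 * real k)"
  shows "\<exists>\<epsilon>>0. \<forall>x. valid_state k x \<and> S_tot k x > 3 * k ^ 3 \<longrightarrow>
           drift k lam (L1 k) x < - \<epsilon>"
proof -
  have main: "drift k lam (L1 k) x < - (1/48)" if H: "valid_state k x \<and> S_tot k x > 3 * k ^ 3" for x
  proof -
    have V: "valid_state k x" using H by simp
    let ?S = "real (S_tot k x)" and ?A = "real (x {})" and ?B = "\<Sum>C\<in>Mid k. real (x C)"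
      and ?F = "\<Sum>C\<in>Fs k. real (x C)"
    have ne: "Fs k \<noteq> {}" using Fs_mem[of 1 k] assms(1) by (auto simp: chunks_def)
    define m where "m = Max (x ` Fs k)"
    have "m \<in> x ` Fs k" unfolding m_def using ne by (intro Max_in) auto
    then obtain C0 where C0: "C0 \<in> Fs k" "x C0 = m" by blast
    have mx: "x C \<le> x C0" if "C \<in> Fs k" for C using that C0(2) unfolding m_def by auto
    let ?M = "real (x C0)"
    have FkM: "?F \<le> real k * ?M"
    proof -
      have "?F \<le> real (card (Fs k)) * ?M" by (rule sum_bounded_above) (use mx in auto)
      also have "\<dots> \<le> real k * ?M" using card_Fs[OF assms(1)] by (intro mult_right_mono) auto
      finally show ?thesis .
    qed
    have MF: "?M \<le> ?F" by (rule member_le_sum) (use C0 in auto)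
    have hB: "?B = 0 \<or> ?B \<ge> 1"
    proof -
      have e: "?B = real (\<Sum>C\<in>Mid k. x C)" by simp
      have "(\<Sum>C\<in>Mid k. x C) = 0 \<or> (\<Sum>C\<in>Mid k. x C) \<ge> 1" by linarith
      then show ?thesis unfolding e by (metis of_nat_0 of_nat_1 of_nat_mono)
    qed
    have Sk: "?S > 3 * real k ^ 3"
    proof -
      have "real (3 * k^3) < ?S" using H by (simp only: of_nat_less_iff)
      then show ?thesis by simp
    qed
    have D38: "Dtot k x \<ge> 3/8"
      by (rule arith_final[OF decomp[OF assms(1)] _ _ _ MF FkM _ Sk hB bound1[OF V assms(1)]
               bound2[OF V assms(1)] bound3[OF V assms(1) C0(1)]])
         (use assms(1) in \<open>auto intro: sum_nonneg\<close>)
    have lk: "lam * real k \<le> 1/3"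
    proof -
      have "lam * real k \<le> 1 / (3 * real k) * real k" using assms(3) by (intro mult_right_mono) auto
      then show ?thesis using assms(1) by simp
    qed
    show ?thesis using drift_eq[of k lam x] D38 lk by linarith
  qed
  show ?thesis by (intro exI[of _ "1/48"]) (use main in auto)
qed

end
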